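(* Let $\mathcal B$ be a unital $*$-algebra, $\phi:\mathcal B\to\mathbb C$ a positive faithful star-linear functional and $\gamma:\mathcal B\to\mathcal B$ a star-linear map such that $\gamma+\phi$ is completely positive. If for some $t<1$ the map $\gamma+t\phi$ is still completely positive, then the sesquilinear form $\langle\cdot,\cdot\rangle_{\gamma,\phi}$ on the algebraic Fock space $\mathcal F_{alg}(\mathcal B)$ is non-degenerate, i.e. $\langle\xi,\xi\rangle_{\gamma,\phi}=0$ implies $\xi=0$.
   Context: For a star-linear $\psi:\mathcal B\to\mathbb C$ and scalar $s$, $(\gamma+s\psi)[b]:=\gamma[b]+s\psi[b]1_{\mathcal B}$. A map $T:\mathcal B\to\mathcal B$ is completely positive if for every $n$ the entrywise map $M_n(\mathcal B)\to M_n(\mathcal B)$ sends positive elements (finite sums $\sum u_i^*u_i$) to positive elements. $\phi$ is faithful if $\phi[u^*u]=0$ only for $u=0$. The algebraic Fock space is $\mathcal F_{alg}(\mathcal B)=\mathbb C\Omega\oplus\bigoplus_{n\ge1}\mathcal B^{\otimes n}$ (algebraic tensor powers), with the sesquilinear form determined by $\langle\Omega,\Omega\rangle_{\gamma,\phi}=1$, $\Omega$ orthogonal to all tensors, and $\langle u_1\otimes\cdots\otimes u_n, v_1\otimes\cdots\otimes v_k\rangle_{\gamma,\phi}=\delta_{n=k}\,\phi\big[v_n^*(\gamma+\phi)[v_{n-1}^*(\gamma+\phi)[\cdots(\gamma+\phi)[v_1^*u_1]\cdots]u_{n-1}]u_n\big]$, extended linearly in the first and antilinearly in the second argument. *)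

theory Defs
  imports Complex_Main
begin

class unital_star_algebra = ring_1 +
  fixes scaleC :: "complex \<Rightarrow> 'a \<Rightarrow> 'a"
    and star :: "'a \<Rightarrow> 'a"
  assumes scaleC_add_right: "scaleC c (x + y) = scaleC c x + scaleC c y"
    and scaleC_add_left: "scaleC (c + d) x = scaleC c x + scaleC d x"
    and scaleC_scaleC: "scaleC c (scaleC d x) = scaleC (c * d) x"
    and scaleC_one: "scaleC 1 x = x"
    and scaleC_mult_left: "scaleC c x * y = scaleC c (x * y)"
    and scaleC_mult_right: "x * scaleC c y = scaleC c (x * y)"
    and star_add: "star (x + y) = star x + star y"
    and star_scaleC: "star (scaleC c x) = scaleC (cnj c) (star x)"
    and star_mult: "star (x * y) = star y * star x"
    and star_star: "star (star x) = x"

definition star_linear_functional :: "('b::unital_star_algebra \<Rightarrow> complex) \<Rightarrow> bool" where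
  "star_linear_functional \<psi> \<longleftrightarrow>
     (\<forall>x y. \<psi> (x + y) = \<psi> x + \<psi> y) \<and>
     (\<forall>c x. \<psi> (scaleC c x) = c * \<psi> x) \<and>
     (\<forall>x. \<psi> (star x) = cnj (\<psi> x))"

definition star_linear_map :: "('b::unital_star_algebra \<Rightarrow> 'b) \<Rightarrow> bool" where
  "star_linear_map T \<longleftrightarrow>
     (\<forall>x y. T (x + y) = T x + T y) \<and>
     (\<forall>c x. T (scaleC c x) = scaleC c (T x)) \<and>
     (\<forall>x. T (star x) = star (T x))"

definition positive_elem :: "'b::unital_star_algebra \<Rightarrow> bool" where
  "positive_elem b \<longleftrightarrow> (\<exists>us. b = sum_list (map (\<lambda>u. star u * u) us))"

definition positive_functional :: "('b::unital_star_algebra \<Rightarrow> complex) \<Rightarrow> bool" where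
  "positive_functional \<psi> \<longleftrightarrow>
     (\<forall>b. positive_elem b \<longrightarrow> Im (\<psi> b) = 0 \<and> Re (\<psi> b) \<ge> 0)"

definition faithful :: "('b::unital_star_algebra \<Rightarrow> complex) \<Rightarrow> bool" where
  "faithful \<psi> \<longleftrightarrow> (\<forall>u. \<psi> (star u * u) = 0 \<longrightarrow> u = 0)"

text \<open>n x n matrices over B are represented by functions nat => nat => B, only the
entries with indices < n being relevant.\<close>

definition mat_positive :: "nat \<Rightarrow> (nat \<Rightarrow> nat \<Rightarrow> 'b::unital_star_algebra) \<Rightarrow> bool" where
  "mat_positive n M \<longleftrightarrow>
     (\<exists>Us :: (nat \<Rightarrow> nat \<Rightarrow> 'b) list. \<forall>i<n. \<forall>j<n.
        M i j = sum_list (map (\<lambda>U. \<Sum>k<n. star (U k i) * U k j) Us))"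

definition completely_positive :: "('b::unital_star_algebra \<Rightarrow> 'b) \<Rightarrow> bool" where
  "completely_positive T \<longleftrightarrow>
     (\<forall>n M. mat_positive n M \<longrightarrow> mat_positive n (\<lambda>i j. T (M i j)))"

definition shift_map :: "('b::unital_star_algebra \<Rightarrow> 'b) \<Rightarrow> complex \<Rightarrow> ('b \<Rightarrow> complex) \<Rightarrow> 'b \<Rightarrow> 'b" where
  "shift_map \<gamma> s \<psi> b = \<gamma> b + scaleC (s * \<psi> b) 1"

text \<open>The algebraic Fock space C Omega + (+)_{n>=1} B^{(x)n} is realised as the free
complex vector space on words (lists) over B -- the empty word being Omega -- modulo
the subspace spanned by the multilinearity relations in each tensor slot. Elements of
the free vector space are finitely supported functions 'b list => complex.\<close>

definition wdelta :: "'b list \<Rightarrow> 'b list \<Rightarrow> complex" where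
  "wdelta w x = (if x = w then 1 else 0)"

inductive_set tensor_relations :: "('b::unital_star_algebra list \<Rightarrow> complex) set" where
  add_rel: "(\<lambda>w. wdelta (xs @ [a + b] @ ys) w - wdelta (xs @ [a] @ ys) w
                 - wdelta (xs @ [b] @ ys) w) \<in> tensor_relations"
| scale_rel: "(\<lambda>w. wdelta (xs @ [scaleC c a] @ ys) w - c * wdelta (xs @ [a] @ ys) w)
                 \<in> tensor_relations"

text \<open>Complex linear span of the relations: the kernel of the quotient map onto the
algebraic Fock space.\<close>

inductive_set fock_null :: "('b::unital_star_algebra list \<Rightarrow> complex) set" where
  zero: "(\<lambda>w. 0) \<in> fock_null"
| step: "r \<in> tensor_relations \<Longrightarrow> f \<in> fock_null \<Longrightarrow> (\<lambda>w. c * r w + f w) \<in> fock_null"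

text \<open>The form on elementary tensors:
 <u_1..u_n, v_1..v_n> = phi[ v_n* K[ v_{n-1}* K[ ... K[v_1* u_1] ... ] u_{n-1} ] u_n ]
 with K = gamma + phi.\<close>

fun nest :: "('b::unital_star_algebra \<Rightarrow> 'b) \<Rightarrow> ('b \<times> 'b) list \<Rightarrow> 'b \<Rightarrow> 'b" where
  "nest K [] x = x"
| "nest K ((u, v) # ps) x = nest K ps (star v * K x * u)"

definition word_form :: "('b::unital_star_algebra \<Rightarrow> 'b) \<Rightarrow> ('b \<Rightarrow> complex) \<Rightarrow> 'b list \<Rightarrow> 'b list \<Rightarrow> complex" where
  "word_form \<gamma> \<phi> us vs =
     (if length us \<noteq> length vs then 0
      else (case zip us vs of
              [] \<Rightarrow> 1
            | (u1, v1) # ps \<Rightarrow> \<phi> (nest (shift_map \<gamma> 1 \<phi>) ps (star v1 * u1))))"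

definition fock_form :: "('b::unital_star_algebra \<Rightarrow> 'b) \<Rightarrow> ('b \<Rightarrow> complex) \<Rightarrow>
    ('b list \<Rightarrow> complex) \<Rightarrow> ('b list \<Rightarrow> complex) \<Rightarrow> complex" where
  "fock_form \<gamma> \<phi> \<xi> \<eta> =
     (\<Sum>u\<in>{u. \<xi> u \<noteq> 0}. \<Sum>v\<in>{v. \<eta> v \<noteq> 0}. \<xi> u * cnj (\<eta> v) * word_form \<gamma> \<phi> u v)"

end

theory Submission
  imports Defs
begin

lemma scaleC_zero_left[simp]: "scaleC 0 (x::'a::unital_star_algebra) = 0"
proof -
  have "scaleC 0 x = scaleC 0 x + scaleC 0 x" using scaleC_add_left[of 0 0 x] by simp
  then show ?thesis by simp
qed

lemma scaleC_zero_right[simp]: "scaleC c (0::'a::unital_star_algebra) = 0"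
proof -
  have "scaleC c (0::'a) = scaleC c 0 + scaleC c 0" using scaleC_add_right[of c 0 0] by simp
  then show ?thesis by simp
qed

lemma scaleC_minus_right: "scaleC c (- (x::'a::unital_star_algebra)) = - scaleC c x"
  using scaleC_add_right[of c x "-x"] by (metis add.right_inverse scaleC_zero_right minus_unique)

lemma scaleC_diff_right: "scaleC c ((x::'a::unital_star_algebra) - y) = scaleC c x - scaleC c y"
  using scaleC_add_right[of c x "-y"] scaleC_minus_right[of c y] by simp

lemma scaleC_minus_left: "scaleC (- c) (x::'a::unital_star_algebra) = - scaleC c x"
  using scaleC_add_left[of c "-c" x] by (metis add.right_inverse scaleC_zero_left minus_unique)

lemma scaleC_diff_left: "scaleC (c - d) (x::'a::unital_star_algebra) = scaleC c x - scaleC d x"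
  using scaleC_add_left[of c "-d" x] scaleC_minus_left[of d x] by simp

lemma scaleC_sum_right: "scaleC c (\<Sum>i\<in>A. f i) = (\<Sum>i\<in>A. scaleC c (f i :: 'a::unital_star_algebra))"
  by (induction A rule: infinite_finite_induct) (auto simp: scaleC_add_right)

lemma scaleC_sum_left: "scaleC (\<Sum>i\<in>A. g i) (x::'a::unital_star_algebra) = (\<Sum>i\<in>A. scaleC (g i) x)"
  by (induction A rule: infinite_finite_induct) (auto simp: scaleC_add_left)

lemma star_zero[simp]: "star (0::'a::unital_star_algebra) = 0"
  using scaleC_zero_left star_scaleC by (metis complex_cnj_zero)

lemma star_minus: "star (- (x::'a::unital_star_algebra)) = - star x"
  using star_add[of x "-x"] by (metis add.right_inverse star_zero minus_unique)

lemma star_diff: "star ((x::'a::unital_star_algebra) - y) = star x - star y"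
  using star_add[of x "-y"] star_minus[of y] by simp

lemma star_sum: "star (\<Sum>i\<in>A. f i) = (\<Sum>i\<in>A. star (f i :: 'a::unital_star_algebra))"
  by (induction A rule: infinite_finite_induct) (auto simp: star_add)

lemma star_one[simp]: "star (1::'a::unital_star_algebra) = 1"
proof -
  have "star (1::'a) = star 1 * star (star 1)" by (simp add: star_star)
  also have "\<dots> = star (star 1 * 1)" by (simp only: star_mult)
  also have "\<dots> = 1" by (simp add: star_star)
  finally show ?thesis .
qed

lemma star_scaleC_one: "star (scaleC c (1::'a::unital_star_algebra)) = scaleC (cnj c) 1"
  by (simp add: star_scaleC)

lemma scaleC_one_mult: "scaleC c (1::'a::unital_star_algebra) * scaleC d 1 = scaleC (c * d) 1"
  by (simp add: scaleC_mult_left scaleC_mult_right scaleC_scaleC mult.commute)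

locale slf =
  fixes \<phi> :: "'b::unital_star_algebra \<Rightarrow> complex"
  assumes slf: "star_linear_functional \<phi>"
begin

lemma phi_add: "\<phi> (x + y) = \<phi> x + \<phi> y"
  using slf unfolding star_linear_functional_def by blast
lemma phi_scale: "\<phi> (scaleC c x) = c * \<phi> x"
  using slf unfolding star_linear_functional_def by blast
lemma phi_star: "\<phi> (star x) = cnj (\<phi> x)"
  using slf unfolding star_linear_functional_def by blast
lemma phi_zero[simp]: "\<phi> 0 = 0"
  using phi_add[of 0 0] by simp
lemma phi_minus: "\<phi> (- x) = - \<phi> x"
  using phi_add[of x "-x"] by (metis add.right_inverse phi_zero minus_unique)
lemma phi_diff: "\<phi> (x - y) = \<phi> x - \<phi> y"
  using phi_add[of x "-y"] phi_minus[of y] by simp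
lemma phi_sum: "\<phi> (\<Sum>i\<in>A. f i) = (\<Sum>i\<in>A. \<phi> (f i))"
  by (induction A rule: infinite_finite_induct) (auto simp: phi_add)
lemma phi_cnj_star: "\<phi> x = cnj (\<phi> (star x))"
  by (simp add: phi_star)

end

definition linmap :: "('b::unital_star_algebra \<Rightarrow> 'b) \<Rightarrow> bool" where
  "linmap T \<longleftrightarrow> (\<forall>x y. T (x + y) = T x + T y) \<and> (\<forall>c x. T (scaleC c x) = scaleC c (T x))"

lemma linmap_add: "linmap T \<Longrightarrow> T (x + y) = T x + T y"
  unfolding linmap_def by blast
lemma linmap_scale: "linmap T \<Longrightarrow> T (scaleC c x) = scaleC c (T x)"
  unfolding linmap_def by blast
lemma linmap_zero: "linmap T \<Longrightarrow> T 0 = 0"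
  using linmap_add[of T 0 0] by simp
lemma linmap_minus: "linmap T \<Longrightarrow> T (- x) = - T x"
  using linmap_add[of T x "-x"] linmap_zero[of T] by (metis add.right_inverse minus_unique)
lemma linmap_diff: "linmap T \<Longrightarrow> T (x - y) = T x - T y"
  using linmap_add[of T x "-y"] linmap_minus[of T y] by simp

lemma linmap_shift:
  assumes "star_linear_map \<gamma>" "star_linear_functional \<phi>"
  shows "linmap (shift_map \<gamma> s \<phi>)"
proof -
  interpret slf \<phi> by (rule slf.intro) fact
  have g1: "\<gamma> (x + y) = \<gamma> x + \<gamma> y" for x y using assms(1) unfolding star_linear_map_def by blast
  have g2: "\<gamma> (scaleC c x) = scaleC c (\<gamma> x)" for c x using assms(1) unfolding star_linear_map_def by blast
  show ?thesis unfolding linmap_def shift_map_def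
    by (auto simp: g1 g2 phi_add phi_scale distrib_left scaleC_add_left scaleC_add_right scaleC_scaleC mult.assoc mult.left_commute)
qed

section \<open>Gram positivity\<close>

lemma sum_lessThan_add_split:
  "(\<Sum>l<q1+q2. f l) = (\<Sum>l<q1. f l) + (\<Sum>l<q2. f (q1 + l))" for f :: "nat \<Rightarrow> 'a::comm_monoid_add"
  by (induction q2) (simp_all add: add.assoc)

definition gpos :: "nat \<Rightarrow> (nat \<Rightarrow> nat \<Rightarrow> 'b::unital_star_algebra) \<Rightarrow> bool" where
  "gpos m M \<longleftrightarrow> (\<exists>(q::nat) V. \<forall>i<m. \<forall>j<m. M i j = (\<Sum>l<q. star (V l i) * V l j))"

lemma gposI:
  fixes q :: nat
  assumes "\<And>i j. i < m \<Longrightarrow> j < m \<Longrightarrow> M i j = (\<Sum>l<q. star (V l i) * V l j)"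
  shows "gpos m M"
  unfolding gpos_def using assms by (intro exI[of _ q] exI[of _ V]) blast

lemma gposE:
  assumes "gpos m M"
  obtains V and q :: nat where "\<And>i j. i < m \<Longrightarrow> j < m \<Longrightarrow> M i j = (\<Sum>l<q. star (V l i) * V l j)"
  using assms unfolding gpos_def by blast

lemma gpos_zero: "gpos m (\<lambda>i j. 0)"
  unfolding gpos_def by (rule exI[of _ 0]) simp

lemma gpos_cong: "gpos m M \<Longrightarrow> (\<And>i j. i < m \<Longrightarrow> j < m \<Longrightarrow> M i j = M' i j) \<Longrightarrow> gpos m M'"
proof -
  assume a: "gpos m M" "\<And>i j. i < m \<Longrightarrow> j < m \<Longrightarrow> M i j = M' i j"
  obtain V and q :: nat where 1: "\<And>i j. i < m \<Longrightarrow> j < m \<Longrightarrow> M i j = (\<Sum>l<q. star (V l i) * V l j)"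
    using a(1) by (rule gposE) blast
  show ?thesis by (rule gposI[where q=q and V=V]) (simp add: 1 a(2)[symmetric])
qed

lemma gpos_add:
  assumes "gpos m A" "gpos m B"
  shows "gpos m (\<lambda>i j. A i j + B i j)"
proof -
  obtain V1 and q1 :: nat where 1: "\<And>i j. i < m \<Longrightarrow> j < m \<Longrightarrow> A i j = (\<Sum>l<q1. star (V1 l i) * V1 l j)"
    using assms(1) by (rule gposE) blast
  obtain V2 and q2 :: nat where 2: "\<And>i j. i < m \<Longrightarrow> j < m \<Longrightarrow> B i j = (\<Sum>l<q2. star (V2 l i) * V2 l j)"
    using assms(2) by (rule gposE) blast
  define V where "V l = (if l < q1 then V1 l else V2 (l - q1))" for l
  have s1: "(\<Sum>l<q1. star (V l i) * V l j) = (\<Sum>l<q1. star (V1 l i) * V1 l j)" for i j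
    by (rule sum.cong) (auto simp: V_def)
  have s2: "(\<Sum>l<q2. star (V (q1 + l) i) * V (q1 + l) j) = (\<Sum>l<q2. star (V2 l i) * V2 l j)" for i j
    by (rule sum.cong) (auto simp: V_def)
  have "A i j + B i j = (\<Sum>l<q1+q2. star (V l i) * V l j)" if "i < m" "j < m" for i j
    unfolding sum_lessThan_add_split s1 s2 using 1[OF that] 2[OF that] by simp
  then show ?thesis by (rule gposI)
qed

lemma gpos_sum:
  fixes q :: nat
  assumes "\<And>l. l < q \<Longrightarrow> gpos m (A l)"
  shows "gpos m (\<lambda>i j. \<Sum>l<q. A l i j)"
  using assms
proof (induction q)
  case 0
  then show ?case by (simp add: gpos_zero)
next
  case (Suc q)
  have "gpos m (\<lambda>i j. \<Sum>l<q. A l i j)" using Suc.IH Suc.prems by simp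
  moreover have "gpos m (A q)" using Suc.prems by simp
  ultimately have "gpos m (\<lambda>i j. (\<Sum>l<q. A l i j) + A q i j)"
    by (rule gpos_add)
  then show ?case by (simp only: sum.lessThan_Suc)
qed

lemma gpos_scale:
  assumes "gpos m M" "0 \<le> r"
  shows "gpos m (\<lambda>i j. scaleC (complex_of_real r) (M i j))"
proof -
  obtain V and q :: nat where 1: "\<And>i j. i < m \<Longrightarrow> j < m \<Longrightarrow> M i j = (\<Sum>l<q. star (V l i) * V l j)"
    using assms(1) by (rule gposE) blast
  define W where "W l i = scaleC (complex_of_real (sqrt r)) (V l i)" for l i
  have e: "star (W l i) * W l j = scaleC (complex_of_real r) (star (V l i) * V l j)" for l i j
  proof -
    have "star (W l i) * W l j = scaleC (complex_of_real (sqrt r) * complex_of_real (sqrt r)) (star (V l i) * V l j)"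
      unfolding W_def star_scaleC scaleC_mult_left scaleC_mult_right scaleC_scaleC complex_cnj_complex_of_real ..
    also have "complex_of_real (sqrt r) * complex_of_real (sqrt r) = complex_of_real r"
    proof -
      have "sqrt r * sqrt r = r" using assms(2) by simp
      then show ?thesis by (simp only: of_real_mult[symmetric])
    qed
    finally show ?thesis .
  qed
  have "scaleC (complex_of_real r) (M i j) = (\<Sum>l<q. star (W l i) * W l j)" if "i < m" "j < m" for i j
    using 1 that by (simp add: e scaleC_sum_right)
  then show ?thesis by (rule gposI)
qed

lemma gpos_diag:
  assumes "gpos m N"
  shows "gpos m (\<lambda>i j. star (a i) * N i j * a j)"
proof -
  obtain V and q :: nat where 1: "\<And>i j. i < m \<Longrightarrow> j < m \<Longrightarrow> N i j = (\<Sum>l<q. star (V l i) * V l j)"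
    using assms(1) by (rule gposE) blast
  define W where "W l i = V l i * a i" for l i
  have e: "star (W l i) * W l j = star (a i) * (star (V l i) * V l j) * a j" for l i j
    unfolding W_def star_mult by (simp only: mult.assoc)
  have "star (a i) * N i j * a j = (\<Sum>l<q. star (W l i) * W l j)" if "i < m" "j < m" for i j
    using 1 that unfolding e by (simp only: sum_distrib_left sum_distrib_right)
  then show ?thesis by (rule gposI)
qed

lemma gpos_single: "gpos m (\<lambda>i j. \<Sum>k<m. star (U k i) * U k j)"
  unfolding gpos_def by (intro exI[of _ m] exI[of _ U]) simp

lemma gpos_sum_list: "gpos m (\<lambda>i j. sum_list (map (\<lambda>U. \<Sum>k<m. star (U k i) * U k j) Us))"
proof (induction Us)
  case Nil
  show ?case unfolding list.map sum_list.Nil by (rule gpos_zero)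
next
  case (Cons U Us)
  show ?case unfolding list.map sum_list.Cons by (rule gpos_add[OF gpos_single[of m U] Cons])
qed

lemma mat_positive_gpos: "mat_positive m M \<Longrightarrow> gpos m M"
proof -
  assume "mat_positive m M"
  then obtain Us where "\<forall>i<m. \<forall>j<m. M i j = sum_list (map (\<lambda>U. \<Sum>k<m. star (U k i) * U k j) Us)"
    unfolding mat_positive_def by blast
  then show ?thesis using gpos_cong[OF gpos_sum_list[of m Us], of M] by simp
qed

lemma gpos_mat_positive:
  assumes "gpos m M" "0 < m"
  shows "mat_positive m M"
proof -
  obtain V and q :: nat where 1: "\<And>i j. i < m \<Longrightarrow> j < m \<Longrightarrow> M i j = (\<Sum>l<q. star (V l i) * V l j)"
    using assms(1) by (rule gposE) blast
  define U where "U l (k::nat) i = (if k = 0 then V l i else 0)" for l k i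
  have inner: "(\<Sum>k<m. star (U l k i) * U l k j) = star (V l i) * V l j" for l i j
  proof -
    have "(\<Sum>k<m. star (U l k i) * U l k j) = (\<Sum>k<m. if k = 0 then star (V l i) * V l j else 0)"
      by (rule sum.cong) (auto simp: U_def)
    also have "\<dots> = star (V l i) * V l j" using assms(2) by (simp add: sum.delta)
    finally show ?thesis .
  qed
  have "M i j = sum_list (map (\<lambda>W. \<Sum>k<m. star (W k i) * W k j) (map U [0..<q]))" if "i < m" "j < m" for i j
  proof -
    have "sum_list (map (\<lambda>W. \<Sum>k<m. star (W k i) * W k j) (map U [0..<q]))
        = sum_list (map (\<lambda>l. star (V l i) * V l j) [0..<q])"
      by (simp add: inner o_def)
    also have "\<dots> = (\<Sum>l<q. star (V l i) * V l j)"
      by (simp add: sum_set_upt_conv_sum_list_nat[symmetric] lessThan_atLeast0)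
    finally show ?thesis using 1 that by simp
  qed
  then show ?thesis unfolding mat_positive_def by blast
qed

definition gcp :: "('b::unital_star_algebra \<Rightarrow> 'b) \<Rightarrow> bool" where
  "gcp T \<longleftrightarrow> (\<forall>m M. gpos m M \<longrightarrow> gpos m (\<lambda>i j. T (M i j)))"

lemma cp_gcp:
  assumes "completely_positive T"
  shows "gcp T"
  unfolding gcp_def
proof (intro allI impI)
  fix m M assume "gpos m (M :: nat \<Rightarrow> nat \<Rightarrow> 'a)"
  show "gpos m (\<lambda>i j. T (M i j))"
  proof (cases "m = 0")
    case True
    then show ?thesis unfolding gpos_def by simp
  next
    case False
    then show ?thesis using assms gpos_mat_positive[OF \<open>gpos m M\<close>] mat_positive_gpos
      unfolding completely_positive_def by blast
  qed
qed

lemma gpos_congruence: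
  assumes "gpos p N"
  shows "positive_elem (\<Sum>r<p. \<Sum>s<p. star (x r) * N r s * x s)"
proof -
  obtain V and q :: nat where 1: "\<And>i j. i < p \<Longrightarrow> j < p \<Longrightarrow> N i j = (\<Sum>l<q. star (V l i) * V l j)"
    using assms(1) by (rule gposE) blast
  define w where "w l = (\<Sum>s<p. V l s * x s)" for l
  have "(\<Sum>r<p. \<Sum>s<p. star (x r) * N r s * x s)
      = (\<Sum>r<p. \<Sum>s<p. \<Sum>l<q. star (x r) * star (V l r) * (V l s * x s))"
    using 1 by (intro sum.cong refl) (simp add: sum_distrib_left sum_distrib_right mult.assoc)
  also have "\<dots> = (\<Sum>r<p. \<Sum>l<q. \<Sum>s<p. star (x r) * star (V l r) * (V l s * x s))"
    by (intro sum.cong refl sum.swap)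
  also have "\<dots> = (\<Sum>l<q. \<Sum>r<p. \<Sum>s<p. star (x r) * star (V l r) * (V l s * x s))"
    by (rule sum.swap)
  also have "\<dots> = (\<Sum>l<q. star (w l) * w l)"
    by (simp add: w_def star_sum star_mult sum_product)
  also have "\<dots> = sum_list (map (\<lambda>u. star u * u) (map w [0..<q]))"
    by (simp add: sum_set_upt_conv_sum_list_nat[symmetric] lessThan_atLeast0 o_def)
  finally show ?thesis unfolding positive_elem_def by blast
qed

section \<open>The B-valued form on words\<close>

definition Lw :: "('b::unital_star_algebra \<Rightarrow> 'b) \<Rightarrow> 'b list \<Rightarrow> 'b list \<Rightarrow> 'b" where
  "Lw K us vs = nest K (zip (tl us) (tl vs)) (star (hd vs) * hd us)"

lemma nest_snoc: "nest K (ps @ [(u, v)]) x = star v * K (nest K ps x) * u"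
  by (induction ps arbitrary: x) auto

lemma Lw_single: "Lw K [u] [v] = star v * u"
  unfolding Lw_def by simp

lemma Lw_snoc:
  assumes "length us = length vs" "us \<noteq> []"
  shows "Lw K (us @ [a]) (vs @ [b]) = star b * K (Lw K us vs) * a"
proof -
  obtain u us' where u: "us = u # us'" using assms(2) by (cases us) auto
  obtain v vs' where v: "vs = v # vs'" using assms by (cases vs) auto
  have l: "length us' = length vs'" using assms(1) u v by simp
  show ?thesis unfolding Lw_def u v using l by (simp add: nest_snoc)
qed

lemma mult_scaleC_mid: "a * scaleC c x * b = scaleC c (a * x * (b::'a::unital_star_algebra))"
  by (simp only: scaleC_mult_left scaleC_mult_right)

lemma split_last_word:
  assumes "length w = Suc (Suc n)"
  shows "w = butlast w @ [last w]" "length (butlast w) = Suc n" "butlast w \<noteq> []"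
proof -
  have "w \<noteq> []" using assms by auto
  then show "w = butlast w @ [last w]" by simp
  show "length (butlast w) = Suc n" using assms by simp
  then show "butlast w \<noteq> []" by (metis list.size(3) nat.distinct(1))
qed

lemma pos_words:
  assumes T: "gcp T"
  shows "(\<forall>r<p. length (y r) = Suc n) \<Longrightarrow> gpos p (\<lambda>r s. Lw T (y s) (y r))"
proof (induction n arbitrary: p y)
  case 0
  have "Lw T (y s) (y r) = (\<Sum>l<(1::nat). star ((\<lambda>l i. hd (y i)) l r) * (\<lambda>l i. hd (y i)) l s)"
    if rs: "r < p" "s < p" for r s
  proof -
    obtain u where u: "y r = [u]" using 0 rs by (auto simp: length_Suc_conv)
    obtain v where v: "y s = [v]" using 0 rs by (auto simp: length_Suc_conv)
    show ?thesis unfolding u v by (simp add: Lw_single)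
  qed
  then show ?case by (rule gposI)
next
  case (Suc n)
  define z where "z r = butlast (y r)" for r
  define a where "a r = last (y r)" for r
  have zl: "\<forall>r<p. length (z r) = Suc n" using Suc.prems by (simp add: z_def)
  have "gpos p (\<lambda>r s. Lw T (z s) (z r))" using Suc.IH[OF zl] .
  then have "gpos p (\<lambda>r s. T (Lw T (z s) (z r)))" using T unfolding gcp_def by blast
  then have g: "gpos p (\<lambda>r s. star (a r) * T (Lw T (z s) (z r)) * a s)" by (rule gpos_diag)
  show ?case
  proof (rule gpos_cong[OF g])
    fix r s assume "r < p" "s < p"
    then have lr: "length (y r) = Suc (Suc n)" and ls: "length (y s) = Suc (Suc n)" using Suc.prems by auto
    have "Lw T (y s) (y r) = Lw T (z s @ [a s]) (z r @ [a r])"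
      using split_last_word(1)[OF lr] split_last_word(1)[OF ls] by (simp add: z_def a_def)
    also have "\<dots> = star (a r) * T (Lw T (z s) (z r)) * a s"
      by (rule Lw_snoc) (use split_last_word[OF lr] split_last_word[OF ls] in \<open>auto simp: z_def\<close>)
    finally show "star (a r) * T (Lw T (z s) (z r)) * a s = Lw T (y s) (y r)" by simp
  qed
qed

lemma diff_words:
  assumes K: "linmap K" "gcp K" and Kt: "gcp Kt" and E: "gcp E"
    and dec: "\<And>x. K x = Kt x + scaleC (complex_of_real c) (E x)" and c: "0 \<le> c"
  shows "(\<forall>r<p. length (y r) = Suc n) \<Longrightarrow>
    gpos p (\<lambda>r s. Lw K (y s) (y r) - scaleC (complex_of_real (c ^ n)) (Lw E (y s) (y r)))"
proof (induction n arbitrary: p y)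
  case 0
  show ?case
  proof (rule gpos_cong[OF gpos_zero])
    fix r s assume rs: "r < p" "s < p"
    obtain u where u: "y r = [u]" using 0 rs by (auto simp: length_Suc_conv)
    obtain v where v: "y s = [v]" using 0 rs by (auto simp: length_Suc_conv)
    show "0 = Lw K (y s) (y r) - scaleC (complex_of_real (c ^ 0)) (Lw E (y s) (y r))"
      unfolding u v by (simp add: Lw_single scaleC_one)
  qed
next
  case (Suc n)
  define z where "z r = butlast (y r)" for r
  define a where "a r = last (y r)" for r
  have zl: "\<forall>r<p. length (z r) = Suc n" using Suc.prems by (simp add: z_def)
  define LK where "LK r s = Lw K (z s) (z r)" for r s
  define LE where "LE r s = Lw E (z s) (z r)" for r s
  define \<alpha> where "\<alpha> = complex_of_real (c ^ n)"
  have P: "gpos p (\<lambda>r s. LK r s - scaleC \<alpha> (LE r s))"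
    using Suc.IH[OF zl] unfolding LK_def LE_def \<alpha>_def .
  have NE: "gpos p LE" using pos_words[OF E zl] unfolding LE_def .
  have g1: "gpos p (\<lambda>r s. K (LK r s - scaleC \<alpha> (LE r s)))" using P K(2) unfolding gcp_def by blast
  have g2': "gpos p (\<lambda>r s. Kt (LE r s))" using NE Kt unfolding gcp_def by blast
  have g2: "gpos p (\<lambda>r s. scaleC \<alpha> (Kt (LE r s)))"
    unfolding \<alpha>_def by (rule gpos_scale[OF g2']) (use c in simp)
  have g3: "gpos p (\<lambda>r s. K (LK r s - scaleC \<alpha> (LE r s)) + scaleC \<alpha> (Kt (LE r s)))"
    by (rule gpos_add[OF g1 g2])
  have g: "gpos p (\<lambda>r s. star (a r) * (K (LK r s - scaleC \<alpha> (LE r s)) + scaleC \<alpha> (Kt (LE r s))) * a s)"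
    by (rule gpos_diag[OF g3])
  show ?case
  proof (rule gpos_cong[OF g])
    fix r s assume "r < p" "s < p"
    then have lr: "length (y r) = Suc (Suc n)" and ls: "length (y s) = Suc (Suc n)" using Suc.prems by auto
    have yr: "y r = z r @ [a r]" and ys: "y s = z s @ [a s]"
      using split_last_word(1)[OF lr] split_last_word(1)[OF ls] by (simp_all add: z_def a_def)
    have len: "length (z s) = length (z r)" "z s \<noteq> []"
      using split_last_word[OF lr] split_last_word[OF ls] by (auto simp: z_def)
    have e1: "Lw K (y s) (y r) = star (a r) * K (LK r s) * a s"
      unfolding yr ys LK_def by (rule Lw_snoc[OF len])
    have e2: "Lw E (y s) (y r) = star (a r) * E (LE r s) * a s"
      unfolding yr ys LE_def by (rule Lw_snoc[OF len])
    have ca: "complex_of_real (c ^ Suc n) = \<alpha> * complex_of_real c"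
      unfolding \<alpha>_def by simp
    have inner: "K (LK r s - scaleC \<alpha> (LE r s)) + scaleC \<alpha> (Kt (LE r s))
        = K (LK r s) - scaleC (\<alpha> * complex_of_real c) (E (LE r s))"
    proof -
      have "Kt (LE r s) = K (LE r s) - scaleC (complex_of_real c) (E (LE r s))"
        using dec[of "LE r s"] by simp
      then show ?thesis
        by (simp add: linmap_diff[OF K(1)] linmap_scale[OF K(1)] scaleC_diff_right scaleC_scaleC)
    qed
    show "star (a r) * (K (LK r s - scaleC \<alpha> (LE r s)) + scaleC \<alpha> (Kt (LE r s))) * a s
        = Lw K (y s) (y r) - scaleC (complex_of_real (c ^ Suc n)) (Lw E (y s) (y r))"
      unfolding inner e1 e2 ca
      by (simp add: right_diff_distrib left_diff_distrib mult_scaleC_mid)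
  qed
qed

section \<open>Orthonormal bases\<close>

definition orthonormal :: "('b::unital_star_algebra \<Rightarrow> complex) \<Rightarrow> 'b list \<Rightarrow> bool" where
  "orthonormal \<phi> es \<longleftrightarrow> (\<forall>k<length es. \<forall>l<length es. \<phi> (star (es!k) * es!l) = (if k = l then 1 else 0))"

definition inspan :: "('b::unital_star_algebra \<Rightarrow> complex) \<Rightarrow> 'b list \<Rightarrow> 'b \<Rightarrow> bool" where
  "inspan \<phi> es s \<longleftrightarrow> s = (\<Sum>k<length es. scaleC (\<phi> (star (es!k) * s)) (es!k))"

context slf
begin

lemma phi_lin_comb:
  "\<phi> (x * (\<Sum>k\<in>A. scaleC (c k) (e k))) = (\<Sum>k\<in>A. c k * \<phi> (x * e k))"
  by (simp add: sum_distrib_left scaleC_mult_right phi_sum phi_scale)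

lemma parseval:
  assumes "inspan \<phi> es a"
  shows "\<phi> (star b * a) = (\<Sum>k<length es. \<phi> (star (es!k) * a) * cnj (\<phi> (star (es!k) * b)))"
proof -
  have "\<phi> (star b * a) = \<phi> (star b * (\<Sum>k<length es. scaleC (\<phi> (star (es!k) * a)) (es!k)))"
    using assms unfolding inspan_def by simp
  also have "\<dots> = (\<Sum>k<length es. \<phi> (star (es!k) * a) * \<phi> (star b * es!k))"
    by (rule phi_lin_comb)
  also have "\<dots> = (\<Sum>k<length es. \<phi> (star (es!k) * a) * cnj (\<phi> (star (es!k) * b)))"
  proof (rule sum.cong[OF refl])
    fix k
    have "\<phi> (star b * es!k) = cnj (\<phi> (star (star b * es!k)))" by (rule phi_cnj_star)
    also have "star (star b * es!k) = star (es!k) * b" by (simp add: star_mult star_star)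
    finally show "\<phi> (star (es!k) * a) * \<phi> (star b * es!k) = \<phi> (star (es!k) * a) * cnj (\<phi> (star (es!k) * b))"
      by simp
  qed
  finally show ?thesis .
qed

end

locale fpf = slf +
  assumes pos: "positive_functional \<phi>" and faith: "faithful \<phi>"
begin

lemma phi_sq_real: "\<phi> (star u * u) = complex_of_real (Re (\<phi> (star u * u)))" "Re (\<phi> (star u * u)) \<ge> 0"
proof -
  have "positive_elem (star u * u)" unfolding positive_elem_def by (rule exI[of _ "[u]"]) simp
  then have "Im (\<phi> (star u * u)) = 0" "Re (\<phi> (star u * u)) \<ge> 0" using pos unfolding positive_functional_def by auto
  then show "\<phi> (star u * u) = complex_of_real (Re (\<phi> (star u * u)))" "Re (\<phi> (star u * u)) \<ge> 0"
    by (auto simp: complex_eq_iff)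
qed

lemma onb_exists: "\<exists>es. orthonormal \<phi> es \<and> (\<forall>s\<in>set S. inspan \<phi> es s)"
proof (induction S)
  case Nil
  show ?case by (rule exI[of _ "[]"]) (simp add: orthonormal_def)
next
  case (Cons s S)
  obtain es where on: "orthonormal \<phi> es" and sp: "\<forall>s\<in>set S. inspan \<phi> es s" using Cons.IH by blast
  define d where "d = length es"
  have onk: "\<phi> (star (es!k) * es!l) = (if k = l then 1 else 0)" if "k < d" "l < d" for k l
    using on that unfolding orthonormal_def d_def by blast
  define proj where "proj = (\<Sum>k<d. scaleC (\<phi> (star (es!k) * s)) (es!k))"
  define s' where "s' = s - proj"
  have projl: "\<phi> (star (es!l) * proj) = \<phi> (star (es!l) * s)" if "l < d" for l
  proof -
    have "\<phi> (star (es!l) * proj) = (\<Sum>k<d. \<phi> (star (es!k) * s) * \<phi> (star (es!l) * es!k))"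
      unfolding proj_def by (rule phi_lin_comb)
    also have "\<dots> = (\<Sum>k<d. if k = l then \<phi> (star (es!k) * s) else 0)"
      by (rule sum.cong[OF refl]) (use that in \<open>simp add: onk\<close>)
    also have "\<dots> = \<phi> (star (es!l) * s)" using that by (simp add: sum.delta')
    finally show ?thesis .
  qed
  have orth: "\<phi> (star (es!l) * s') = 0" if "l < d" for l
    unfolding s'_def right_diff_distrib phi_diff projl[OF that] by simp
  show ?case
  proof (cases "s' = 0")
    case True
    have "inspan \<phi> es s" unfolding inspan_def using True unfolding s'_def proj_def d_def by simp
    then show ?thesis using on sp by auto
  next
    case False
    define \<rho> where "\<rho> = Re (\<phi> (star s' * s'))"
    have \<rho>c: "\<phi> (star s' * s') = complex_of_real \<rho>" unfolding \<rho>_def by (rule phi_sq_real(1))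
    have "\<phi> (star s' * s') \<noteq> 0" using False faith unfolding faithful_def by blast
    then have "\<rho> \<noteq> 0" using \<rho>c by auto
    moreover have "\<rho> \<ge> 0" unfolding \<rho>_def by (rule phi_sq_real(2))
    ultimately have \<rho>pos: "\<rho> > 0" by simp
    define \<sigma> where "\<sigma> = complex_of_real (1 / sqrt \<rho>)"
    define e' where "e' = scaleC \<sigma> s'"
    define es' where "es' = es @ [e']"
    have cnjs: "cnj \<sigma> = \<sigma>" unfolding \<sigma>_def by simp
    have o1: "\<phi> (star (es!k) * e') = 0" if "k < d" for k
      unfolding e'_def scaleC_mult_right phi_scale orth[OF that] by simp
    have o2: "\<phi> (star e' * es!k) = 0" if "k < d" for k
    proof -
      have "\<phi> (star e' * es!k) = cnj (\<phi> (star (star e' * es!k)))" by (rule phi_cnj_star)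
      also have "star (star e' * es!k) = star (es!k) * e'" by (simp add: star_mult star_star)
      finally show ?thesis using o1[OF that] by simp
    qed
    have ses': "\<phi> (star e' * s') = complex_of_real (sqrt \<rho>)"
    proof -
      have "\<phi> (star e' * s') = \<sigma> * \<phi> (star s' * s')"
        unfolding e'_def star_scaleC scaleC_mult_left phi_scale cnjs ..
      also have "\<dots> = complex_of_real (1 / sqrt \<rho> * \<rho>)" unfolding \<sigma>_def \<rho>c by simp
      also have "1 / sqrt \<rho> * \<rho> = sqrt \<rho>" using \<rho>pos by (simp add: real_div_sqrt)
      finally show ?thesis .
    qed
    have o3: "\<phi> (star e' * e') = 1"
    proof -
      have "\<phi> (star e' * e') = \<sigma> * \<phi> (star e' * s')"
        unfolding e'_def[of ] scaleC_mult_right phi_scale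
        by (simp add: e'_def)
      also have "\<dots> = complex_of_real (1 / sqrt \<rho> * sqrt \<rho>)" unfolding \<sigma>_def ses' by simp
      also have "1 / sqrt \<rho> * sqrt \<rho> = 1" using \<rho>pos by simp
      finally show ?thesis by simp
    qed
    have on': "orthonormal \<phi> es'"
      unfolding orthonormal_def es'_def
    proof (intro allI impI)
      fix k l assume k: "k < length (es @ [e'])" and l: "l < length (es @ [e'])"
      show "\<phi> (star ((es @ [e']) ! k) * (es @ [e']) ! l) = (if k = l then 1 else 0)"
      proof (cases "k < d")
        case True
        then show ?thesis
        proof (cases "l < d")
          case True
          then show ?thesis using \<open>k < d\<close> by (simp add: nth_append d_def onk)
        next
          case False
          then have "l = d" using l by (simp add: d_def)
          then show ?thesis using \<open>k < d\<close> by (simp add: nth_append d_def o1)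
        qed
      next
        case False
        then have kd: "k = d" using k by (simp add: d_def)
        show ?thesis
        proof (cases "l < d")
          case True
          then show ?thesis using kd by (simp add: nth_append d_def o2)
        next
          case False
          then have "l = d" using l by (simp add: d_def)
          then show ?thesis using kd by (simp add: nth_append d_def o3)
        qed
      qed
    qed
    have sum_es': "(\<Sum>k<length es'. f k) = (\<Sum>k<d. f k) + f d" for f :: "nat \<Rightarrow> 'a"
      by (simp add: es'_def d_def)
    have coef_es': "(\<Sum>k<length es'. scaleC (\<phi> (star (es'!k) * x)) (es'!k))
       = (\<Sum>k<d. scaleC (\<phi> (star (es!k) * x)) (es!k)) + scaleC (\<phi> (star e' * x)) e'" for x
    proof -
      have "(\<Sum>k<d. scaleC (\<phi> (star (es'!k) * x)) (es'!k)) = (\<Sum>k<d. scaleC (\<phi> (star (es!k) * x)) (es!k))"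
        by (rule sum.cong[OF refl]) (simp add: es'_def nth_append d_def)
      moreover have "es'!d = e'" by (simp add: es'_def d_def)
      ultimately show ?thesis unfolding sum_es' by simp
    qed
    have sp': "inspan \<phi> es' x" if "x \<in> set (s # S)" for x
    proof (cases "x = s")
      case True
      have "\<phi> (star e' * s) = \<phi> (star e' * s') + \<phi> (star e' * proj)"
        unfolding s'_def by (simp add: right_diff_distrib phi_diff)
      also have "\<phi> (star e' * proj) = (\<Sum>k<d. \<phi> (star (es!k) * s) * \<phi> (star e' * es!k))"
        unfolding proj_def by (rule phi_lin_comb)
      also have "\<dots> = 0" by (rule sum.neutral) (simp add: o2)
      finally have "\<phi> (star e' * s) = complex_of_real (sqrt \<rho>)" using ses' by simp
      then have "scaleC (\<phi> (star e' * s)) e' = s'"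
        unfolding e'_def scaleC_scaleC \<sigma>_def using \<rho>pos
        by (simp flip: of_real_mult add: scaleC_one)
      then show ?thesis unfolding inspan_def coef_es' True using s'_def proj_def by simp
    next
      case False
      then have xS: "inspan \<phi> es x" using that sp by auto
      have "\<phi> (star e' * x) = \<phi> (star e' * (\<Sum>k<d. scaleC (\<phi> (star (es!k) * x)) (es!k)))"
        using xS unfolding inspan_def d_def by simp
      also have "\<dots> = (\<Sum>k<d. \<phi> (star (es!k) * x) * \<phi> (star e' * es!k))" by (rule phi_lin_comb)
      also have "\<dots> = 0" by (rule sum.neutral) (simp add: o2)
      finally have "\<phi> (star e' * x) = 0" .
      then show ?thesis unfolding inspan_def coef_es' using xS unfolding inspan_def d_def by simp
    qed
    show ?thesis using on' sp' by blast
  qed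
qed

lemma E_gpos_single: "gpos m (\<lambda>i j. scaleC (\<phi> (star (v i) * v j)) (1::'a))"
proof -
  obtain es where on: "orthonormal \<phi> es" and sp: "\<forall>s\<in>set (map v [0..<m]). inspan \<phi> es s"
    using onb_exists by blast
  define W where "W k i = scaleC (\<phi> (star (es!k) * v i)) (1::'a)" for k i
  have "scaleC (\<phi> (star (v i) * v j)) 1 = (\<Sum>k<length es. star (W k i) * W k j)" if "i < m" "j < m" for i j
  proof -
    have "inspan \<phi> es (v j)" using sp that by auto
    then have "\<phi> (star (v i) * v j) = (\<Sum>k<length es. \<phi> (star (es!k) * v j) * cnj (\<phi> (star (es!k) * v i)))"
      by (rule parseval)
    then show ?thesis
      by (simp add: W_def star_scaleC_one scaleC_one_mult scaleC_sum_left mult.commute)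
  qed
  then show ?thesis by (rule gposI[where V=W and q="length es"])
qed

lemma E_gcp: "gcp (\<lambda>x. scaleC (\<phi> x) (1::'a))"
  unfolding gcp_def
proof (intro allI impI)
  fix m M assume "gpos m (M :: nat \<Rightarrow> nat \<Rightarrow> 'a)"
  then obtain V and q :: nat where 1: "\<And>i j. i < m \<Longrightarrow> j < m \<Longrightarrow> M i j = (\<Sum>l<q. star (V l i) * V l j)"
    by (rule gposE) blast
  have "gpos m (\<lambda>i j. \<Sum>l<q. scaleC (\<phi> (star (V l i) * V l j)) (1::'a))"
    by (intro gpos_sum E_gpos_single)
  then show "gpos m (\<lambda>i j. scaleC (\<phi> (M i j)) (1::'a))"

    by (rule gpos_cong) (simp add: 1 phi_sum scaleC_sum_left)
qed

end

section \<open>The null space\<close>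

lemma N_add: "f \<in> fock_null \<Longrightarrow> g \<in> fock_null \<Longrightarrow> (\<lambda>w. f w + g w) \<in> fock_null"
proof (induction f rule: fock_null.induct)
  case zero
  then show ?case by simp
next
  case (step r f c)
  have "(\<lambda>w. c * r w + (\<lambda>w. f w + g w) w) \<in> fock_null"
    by (rule fock_null.step[OF step(1) step(3)[OF step(4)]])
  then show ?case by (simp add: add.assoc)
qed

lemma N_scale: "f \<in> fock_null \<Longrightarrow> (\<lambda>w. a * f w) \<in> fock_null"
proof (induction f rule: fock_null.induct)
  case zero
  then show ?case using fock_null.zero by simp
next
  case (step r f c)
  have "(\<lambda>w. (a * c) * r w + (\<lambda>w. a * f w) w) \<in> fock_null"
    by (rule fock_null.step[OF step(1) step(3)])
  then show ?case by (simp add: distrib_left mult.assoc)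
qed

lemma N_rel: "r \<in> tensor_relations \<Longrightarrow> r \<in> fock_null"
  using fock_null.step[OF _ fock_null.zero, of r 1] by simp

lemma N_sum: "finite A \<Longrightarrow> (\<And>i. i \<in> A \<Longrightarrow> f i \<in> fock_null) \<Longrightarrow> (\<lambda>w. \<Sum>i\<in>A. f i w) \<in> fock_null"
proof (induction A rule: finite_induct)
  case empty
  then show ?case using fock_null.zero by simp
next
  case (insert x F)
  have "(\<lambda>w. f x w + (\<lambda>w. \<Sum>i\<in>F. f i w) w) \<in> fock_null"
    by (rule N_add) (use insert in auto)
  then show ?case using insert by simp
qed

lemma N_cong: "f \<in> fock_null \<Longrightarrow> f = g \<Longrightarrow> g \<in> fock_null" by simp

lemma slot_lin:
  fixes d :: nat
  shows "(\<lambda>w. wdelta (xs @ [\<Sum>k<d. scaleC (c k) (e k)] @ ys) w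
             - (\<Sum>k<d. c k * wdelta (xs @ [e k] @ ys) w)) \<in> fock_null"
proof (induction d)
  case 0
  have "(\<lambda>w. wdelta (xs @ [scaleC 0 0] @ ys) w - 0 * wdelta (xs @ [0] @ ys) w) \<in> fock_null"
    by (rule N_rel) (rule tensor_relations.scale_rel)
  then show ?case by simp
next
  case (Suc d)
  define S where "S = (\<Sum>k<d. scaleC (c k) (e k))"
  define x where "x = scaleC (c d) (e d)"
  have R1: "(\<lambda>w. wdelta (xs @ [S + x] @ ys) w - wdelta (xs @ [S] @ ys) w - wdelta (xs @ [x] @ ys) w) \<in> fock_null"
    by (rule N_rel) (rule tensor_relations.add_rel)
  have R2: "(\<lambda>w. wdelta (xs @ [x] @ ys) w - c d * wdelta (xs @ [e d] @ ys) w) \<in> fock_null"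
    unfolding x_def by (rule N_rel) (rule tensor_relations.scale_rel)
  have IH: "(\<lambda>w. wdelta (xs @ [S] @ ys) w - (\<Sum>k<d. c k * wdelta (xs @ [e k] @ ys) w)) \<in> fock_null"
    using Suc.IH unfolding S_def .
  have "(\<lambda>w. (\<lambda>w. wdelta (xs @ [S + x] @ ys) w - wdelta (xs @ [S] @ ys) w - wdelta (xs @ [x] @ ys) w) w
     + (\<lambda>w. (\<lambda>w. wdelta (xs @ [x] @ ys) w - c d * wdelta (xs @ [e d] @ ys) w) w
     + (\<lambda>w. wdelta (xs @ [S] @ ys) w - (\<Sum>k<d. c k * wdelta (xs @ [e k] @ ys) w)) w) w) \<in> fock_null"
    by (rule N_add[OF R1 N_add[OF R2 IH]])
  then show ?case
    by (rule N_cong) (simp add: fun_eq_iff S_def x_def algebra_simps)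
qed

fun coef :: "('b \<Rightarrow> nat \<Rightarrow> complex) \<Rightarrow> 'b list \<Rightarrow> nat list \<Rightarrow> complex" where
  "coef c (s # w) (k # \<alpha>) = c s k * coef c w \<alpha>"
| "coef c _ _ = 1"

definition Idx :: "nat \<Rightarrow> nat \<Rightarrow> nat list set" where
  "Idx d n = {\<alpha>. set \<alpha> \<subseteq> {..<d} \<and> length \<alpha> = n}"

lemma Idx_finite: "finite (Idx d n)"
  unfolding Idx_def by (rule finite_lists_length_eq) simp

lemma Idx_0: "Idx d 0 = {[]}"
  unfolding Idx_def by auto

lemma sum_Idx_Suc: "(\<Sum>\<alpha>\<in>Idx d (Suc n). f \<alpha>) = (\<Sum>k<d. \<Sum>\<alpha>\<in>Idx d n. f (k # \<alpha>))"
proof -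
  have e: "Idx d (Suc n) = (\<lambda>(\<alpha>, k). k # \<alpha>) ` (Idx d n \<times> {..<d})"
    unfolding Idx_def by (rule lists_length_Suc_eq)
  have i: "inj_on (\<lambda>(\<alpha>, k). k # \<alpha>) (Idx d n \<times> {..<d})"
    by (auto simp: inj_on_def)
  have "(\<Sum>\<alpha>\<in>Idx d (Suc n). f \<alpha>) = (\<Sum>p\<in>Idx d n \<times> {..<d}. f ((\<lambda>(\<alpha>, k). k # \<alpha>) p))"
    unfolding e by (rule sum.reindex[OF i, unfolded o_def])
  also have "\<dots> = (\<Sum>\<alpha>\<in>Idx d n. \<Sum>k<d. f (k # \<alpha>))"
    by (subst sum.cartesian_product) (simp add: split_def)
  also have "\<dots> = (\<Sum>k<d. \<Sum>\<alpha>\<in>Idx d n. f (k # \<alpha>))"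
    by (rule sum.swap)
  finally show ?thesis .
qed

lemma word_expand:
  fixes d :: nat
  assumes "\<forall>s\<in>set w. s = (\<Sum>k<d. scaleC (c s k) (e k))"
  shows "(\<lambda>x. wdelta (xs @ w) x - (\<Sum>\<alpha>\<in>Idx d (length w). coef c w \<alpha> * wdelta (xs @ map e \<alpha>) x)) \<in> fock_null"
  using assms
proof (induction w arbitrary: xs)
  case Nil
  show ?case using fock_null.zero by (simp add: Idx_0)
next
  case (Cons s w)
  have sl: "(\<lambda>x. wdelta (xs @ [s] @ w) x - (\<Sum>k<d. c s k * wdelta (xs @ [e k] @ w) x)) \<in> fock_null"
  proof -
    have "s = (\<Sum>k<d. scaleC (c s k) (e k))" using Cons.prems by simp
    then show ?thesis using slot_lin[where xs=xs and d=d and c="c s" and e=e and ys=w]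
 by simp
  qed
  have ih: "(\<lambda>x. \<Sum>k<d. c s k * (wdelta ((xs @ [e k]) @ w) x
      - (\<Sum>\<alpha>\<in>Idx d (length w). coef c w \<alpha> * wdelta ((xs @ [e k]) @ map e \<alpha>) x))) \<in> fock_null"
  proof (rule N_sum)
    fix k assume "k \<in> {..<d}"
    have "(\<lambda>x. wdelta ((xs @ [e k]) @ w) x
      - (\<Sum>\<alpha>\<in>Idx d (length w). coef c w \<alpha> * wdelta ((xs @ [e k]) @ map e \<alpha>) x)) \<in> fock_null"
      by (rule Cons.IH) (use Cons.prems in simp)
    then show "(\<lambda>x. c s k * (wdelta ((xs @ [e k]) @ w) x
      - (\<Sum>\<alpha>\<in>Idx d (length w). coef c w \<alpha> * wdelta ((xs @ [e k]) @ map e \<alpha>) x))) \<in> fock_null"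
      by (rule N_scale)
  qed simp

  have "(\<lambda>x. (\<lambda>x. wdelta (xs @ [s] @ w) x - (\<Sum>k<d. c s k * wdelta (xs @ [e k] @ w) x)) x +
      (\<lambda>x. \<Sum>k<d. c s k * (wdelta ((xs @ [e k]) @ w) x
      - (\<Sum>\<alpha>\<in>Idx d (length w). coef c w \<alpha> * wdelta ((xs @ [e k]) @ map e \<alpha>) x))) x) \<in> fock_null"
    by (rule N_add[OF sl ih])
  then show ?case
  proof (rule N_cong)
    show "(\<lambda>x. (\<lambda>x. wdelta (xs @ [s] @ w) x - (\<Sum>k<d. c s k * wdelta (xs @ [e k] @ w) x)) x +
      (\<lambda>x. \<Sum>k<d. c s k * (wdelta ((xs @ [e k]) @ w) x
      - (\<Sum>\<alpha>\<in>Idx d (length w). coef c w \<alpha> * wdelta ((xs @ [e k]) @ map e \<alpha>) x))) x)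
      = (\<lambda>x. wdelta (xs @ s # w) x - (\<Sum>\<alpha>\<in>Idx d (length (s # w)). coef c (s # w) \<alpha> * wdelta (xs @ map e \<alpha>) x))"
      by (simp add: fun_eq_iff sum_Idx_Suc right_diff_distrib sum_distrib_left sum_subtractf mult.assoc)
  qed
qed

lemma prod_sum_coef:
  "length u = length v \<Longrightarrow>
   prod_list (map (\<lambda>(a, b). \<Sum>k<d. g a k * cnj (g b k)) (zip u v))
   = (\<Sum>\<alpha>\<in>Idx d (length u). coef g u \<alpha> * cnj (coef g v \<alpha>))"
proof (induction u arbitrary: v)
  case Nil
  then show ?case by (simp add: Idx_0)
next
  case (Cons a u)
  then obtain b v' where v: "v = b # v'" and l: "length u = length v'" by (cases v) auto
  have "prod_list (map (\<lambda>(a, b). \<Sum>k<d. g a k * cnj (g b k)) (zip (a # u) v))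
      = (\<Sum>k<d. g a k * cnj (g b k)) * (\<Sum>\<alpha>\<in>Idx d (length u). coef g u \<alpha> * cnj (coef g v' \<alpha>))"
    using Cons.IH[OF l] v by simp
  also have "\<dots> = (\<Sum>k<d. \<Sum>\<alpha>\<in>Idx d (length u). coef g (a # u) (k # \<alpha>) * cnj (coef g v (k # \<alpha>)))"
    by (simp add: v sum_product mult_ac)
  also have "\<dots> = (\<Sum>\<alpha>\<in>Idx d (length (a # u)). coef g (a # u) \<alpha> * cnj (coef g v \<alpha>))"
    by (simp add: sum_Idx_Suc)
  finally show ?case .
qed

lemma sum_cnj_product: "(\<Sum>v\<in>B. \<Sum>u\<in>A. f u * cnj (g v)) = (\<Sum>u\<in>A. f u) * cnj (\<Sum>v\<in>B. g v :: complex)"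
  unfolding cnj_sum sum_product by (rule sum.swap)

lemma sum_distinct_nth:
 "distinct ws \<Longrightarrow> (\<Sum>u\<in>set ws. g u) = (\<Sum>r<length ws. g (ws ! r))"
  by (simp add: sum.distinct_set_conv_list sum_list_sum_nth lessThan_atLeast0)

lemma star_scaleC_one_mid: "star (scaleC a (1::'a::unital_star_algebra)) * Z * scaleC b 1 = scaleC (cnj a * b) Z"
  by (simp add: star_scaleC scaleC_mult_left scaleC_mult_right scaleC_scaleC mult.commute)

lemma congr_sum_words:
  assumes "distinct ws"
  shows "(\<Sum>r<length ws. \<Sum>s<length ws. star (scaleC (\<xi> (ws!r)) (1::'a::unital_star_algebra)) * h (ws!s) (ws!r) * scaleC (\<xi> (ws!s)) 1)
    = (\<Sum>v\<in>set ws. \<Sum>u\<in>set ws. scaleC (cnj (\<xi> v) * \<xi> u) (h u v))"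
  by (simp add: star_scaleC_one_mid sum_distinct_nth[OF assms])

context slf
begin

lemma phi_nest_E: "\<phi> (nest (\<lambda>x. scaleC (\<phi> x) 1) ps x) = \<phi> x * prod_list (map (\<lambda>(u, v). \<phi> (star v * u)) ps)"
proof (induction ps arbitrary: x)
  case Nil
  then show ?case by simp
next
  case (Cons p ps)
  obtain u v where p: "p = (u, v)" by (cases p)
  have "\<phi> (star v * scaleC (\<phi> x) 1 * u) = \<phi> x * \<phi> (star v * u)"
    by (simp add: mult_scaleC_mid phi_scale)
  then show ?case using Cons[of "star v * scaleC (\<phi> x) 1 * u"] by (simp add: p)
qed

lemma phi_Lw_E:
  assumes "length u = length v" "u \<noteq> []"
  shows "\<phi> (Lw (\<lambda>x. scaleC (\<phi> x) 1) u v) = prod_list (map (\<lambda>(a, b). \<phi> (star b * a)) (zip u v))"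
proof -
  obtain a u' where u: "u = a # u'" using assms(2) by (cases u) auto
  obtain b v' where v: "v = b # v'" using assms u by (cases v) auto
  show ?thesis unfolding Lw_def u v by (simp add: phi_nest_E)
qed

end

lemma word_form_Lw:
  assumes "length u = length v" "u \<noteq> []"
  shows "word_form \<gamma> \<phi> u v = \<phi> (Lw (shift_map \<gamma> 1 \<phi>) u v)"
proof -
  obtain a u' where u: "u = a # u'" using assms(2) by (cases u) auto
  obtain b v' where v: "v = b # v'" using assms u by (cases v) auto
  show ?thesis unfolding Lw_def word_form_def u v using assms(1) u v by simp
qed

context fpf
begin

lemma phi_positive: "positive_elem z \<Longrightarrow> \<phi> z = complex_of_real (Re (\<phi> z)) \<and> Re (\<phi> z) \<ge> 0"
  using pos unfolding positive_functional_def by (auto simp: complex_eq_iff)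


lemma T_suc:
  fixes A :: "'a list set" and \<xi> :: "'a list \<Rightarrow> complex" and es :: "'a list" and m :: nat
    and K Kt :: "'a \<Rightarrow> 'a"
  assumes K: "linmap K" "gcp K" and Kt: "gcp Kt" and Kdef: "K = shift_map \<gamma> 1 \<phi>"
    and dec: "\<And>x. K x = Kt x + scaleC (complex_of_real c) (scaleC (\<phi> x) 1)" and c: "0 < c"
    and A: "finite A" "\<And>u. u \<in> A \<Longrightarrow> length u = Suc m"
    and sp: "\<And>u s. u \<in> A \<Longrightarrow> s \<in> set u \<Longrightarrow> inspan \<phi> es s"
  shows "\<exists>r\<ge>0. (\<Sum>u\<in>A. \<Sum>v\<in>A. \<xi> u * cnj (\<xi> v) * word_form \<gamma> \<phi> u v) = complex_of_real r \<and>
          (r = 0 \<longrightarrow> (\<forall>\<alpha>\<in>Idx (length es) (Suc m).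
              (\<Sum>u\<in>A. \<xi> u * coef (\<lambda>s k. \<phi> (star (es!k) * s)) u \<alpha>) = 0))"
proof -
  define E where "E = (\<lambda>x. scaleC (\<phi> x) (1::'a))"
  define cf where "cf = (\<lambda>s k. \<phi> (star (es!k) * s))"
  define d where "d = length es"
  define \<beta> where "\<beta> = complex_of_real (c ^ m)"
  obtain ws where ws: "set ws = A" "distinct ws" using finite_distinct_list[OF A(1)] by blast
  define p where "p = length ws"
  define y where "y r = ws ! r" for r
  have yl: "\<forall>r<p. length (y r) = Suc m" using A(2) ws(1) by (auto simp: y_def p_def)
  have gE: "gcp E" using E_gcp unfolding E_def .
  have dec': "\<And>x. K x = Kt x + scaleC (complex_of_real c) (E x)" using dec unfolding E_def .
  have gX: "gpos p (\<lambda>r s. Lw K (y s) (y r) - scaleC (complex_of_real (c ^ m)) (Lw E (y s) (y r)))"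
    by (rule diff_words[OF K Kt gE dec' _ yl]) (use c in simp)
  have gY: "gpos p (\<lambda>r s. Lw E (y s) (y r))" by (rule pos_words[OF gE yl])
  define X where "X = (\<Sum>v\<in>A. \<Sum>u\<in>A. scaleC (cnj (\<xi> v) * \<xi> u) (Lw K u v - scaleC \<beta> (Lw E u v)))"
  define Y where "Y = (\<Sum>v\<in>A. \<Sum>u\<in>A. scaleC (cnj (\<xi> v) * \<xi> u) (Lw E u v))"
  have pX: "positive_elem X"
  proof -
    have "positive_elem (\<Sum>r<p. \<Sum>s<p. star (scaleC (\<xi> (y r)) (1::'a))
        * (Lw K (y s) (y r) - scaleC (complex_of_real (c ^ m)) (Lw E (y s) (y r))) * scaleC (\<xi> (y s)) 1)"
      by (rule gpos_congruence[OF gX])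
    then show ?thesis
      unfolding X_def \<beta>_def using congr_sum_words[OF ws(2), of \<xi> "\<lambda>u v. Lw K u v - scaleC (complex_of_real (c ^ m)) (Lw E u v)"]
      by (simp add: ws(1) y_def p_def)
  qed
  have pY: "positive_elem Y"
  proof -
    have "positive_elem (\<Sum>r<p. \<Sum>s<p. star (scaleC (\<xi> (y r)) (1::'a))
        * Lw E (y s) (y r) * scaleC (\<xi> (y s)) 1)"
      by (rule gpos_congruence[OF gY])
    then show ?thesis
      unfolding Y_def using congr_sum_words[OF ws(2), of \<xi> "\<lambda>u v. Lw E u v"]
      by (simp add: ws(1) y_def p_def)
  qed
  have XY: "(\<Sum>u\<in>A. \<Sum>v\<in>A. \<xi> u * cnj (\<xi> v) * word_form \<gamma> \<phi> u v) = \<phi> X + \<beta> * \<phi> Y"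
  proof -
    have "X + scaleC \<beta> Y = (\<Sum>v\<in>A. \<Sum>u\<in>A. scaleC (cnj (\<xi> v) * \<xi> u) (Lw K u v - scaleC \<beta> (Lw E u v))
        + scaleC \<beta> (scaleC (cnj (\<xi> v) * \<xi> u) (Lw E u v)))"
      unfolding X_def Y_def by (simp add: scaleC_sum_right sum.distrib)
    also have "\<dots> = (\<Sum>v\<in>A. \<Sum>u\<in>A. scaleC (cnj (\<xi> v) * \<xi> u) (Lw K u v))"
      by (simp add: scaleC_diff_right scaleC_scaleC mult.commute)
    finally have e1: "X + scaleC \<beta> Y = (\<Sum>v\<in>A. \<Sum>u\<in>A. scaleC (cnj (\<xi> v) * \<xi> u) (Lw K u v))" .
    have "\<phi> X + \<beta> * \<phi> Y = \<phi> (X + scaleC \<beta> Y)" by (simp add: phi_add phi_scale)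
    also have "\<dots> = (\<Sum>v\<in>A. \<Sum>u\<in>A. cnj (\<xi> v) * \<xi> u * \<phi> (Lw K u v))"
      unfolding e1 by (simp add: phi_sum phi_scale)
    also have "\<dots> = (\<Sum>v\<in>A. \<Sum>u\<in>A. \<xi> u * cnj (\<xi> v) * word_form \<gamma> \<phi> u v)"
    proof (intro sum.cong refl)
      fix u v assume "v \<in> A" "u \<in> A"
      then have lu: "length u = Suc m" and lv: "length v = Suc m" using A(2) by auto
      then have "length u = length v" "u \<noteq> []" by auto
      then show "cnj (\<xi> v) * \<xi> u * \<phi> (Lw K u v) = \<xi> u * cnj (\<xi> v) * word_form \<gamma> \<phi> u v"
        unfolding Kdef by (simp add: word_form_Lw)
    qed
    also have "\<dots> = (\<Sum>u\<in>A. \<Sum>v\<in>A. \<xi> u * cnj (\<xi> v) * word_form \<gamma> \<phi> u v)"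
      by (rule sum.swap)
    finally show ?thesis by simp
  qed
  obtain a where a: "\<phi> X = complex_of_real a" "a \<ge> 0" using phi_positive[OF pX] by blast
  obtain b where b: "\<phi> Y = complex_of_real b" "b \<ge> 0" using phi_positive[OF pY] by blast
  have cm: "c ^ m > 0" using c by simp
  define r where "r = a + c ^ m * b"
  have r0: "r \<ge> 0" unfolding r_def using a b cm by simp
  have rT: "(\<Sum>u\<in>A. \<Sum>v\<in>A. \<xi> u * cnj (\<xi> v) * word_form \<gamma> \<phi> u v) = complex_of_real r"
    unfolding XY a b r_def \<beta>_def by simp
  have phiY: "\<phi> Y = (\<Sum>\<alpha>\<in>Idx d (Suc m). complex_of_real ((cmod (\<Sum>u\<in>A. \<xi> u * coef cf u \<alpha>))\<^sup>2))"
  proof -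
    have lw: "\<phi> (Lw E u v) = (\<Sum>\<alpha>\<in>Idx d (Suc m). coef cf u \<alpha> * cnj (coef cf v \<alpha>))" if "u \<in> A" "v \<in> A" for u v
    proof -
      have lu: "length u = Suc m" and lv: "length v = Suc m" using A(2) that by auto
      then have l: "length u = length v" "u \<noteq> []" "length u = Suc m" by auto

      have "\<phi> (Lw E u v) = prod_list (map (\<lambda>(a, b). \<phi> (star b * a)) (zip u v))"
        unfolding E_def by (rule phi_Lw_E[OF l(1,2)])
      also have "\<dots> = prod_list (map (\<lambda>(a, b). \<Sum>k<d. cf a k * cnj (cf b k)) (zip u v))"
      proof (rule arg_cong[where f=prod_list], rule map_cong[OF refl])
        fix q assume q: "q \<in> set (zip u v)"
        obtain a' b' where q': "q = (a', b')" by (cases q)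
        have "a' \<in> set u" using q q' by (auto dest: set_zip_leftD)
        then have "inspan \<phi> es a'" using sp that by blast
        then show "(\<lambda>(a, b). \<phi> (star b * a)) q = (\<lambda>(a, b). \<Sum>k<d. cf a k * cnj (cf b k)) q"
          unfolding q' cf_def d_def by (simp add: parseval)
      qed
      also have "\<dots> = (\<Sum>\<alpha>\<in>Idx d (length u). coef cf u \<alpha> * cnj (coef cf v \<alpha>))"
        by (rule prod_sum_coef[OF l(1)])
      finally show ?thesis using l(3) by simp
    qed
    have "\<phi> Y = (\<Sum>v\<in>A. \<Sum>u\<in>A. cnj (\<xi> v) * \<xi> u * (\<Sum>\<alpha>\<in>Idx d (Suc m). coef cf u \<alpha> * cnj (coef cf v \<alpha>)))"
      unfolding Y_def by (simp add: phi_sum phi_scale lw)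
    also have "\<dots> = (\<Sum>v\<in>A. \<Sum>u\<in>A. \<Sum>\<alpha>\<in>Idx d (Suc m). (\<xi> u * coef cf u \<alpha>) * cnj (\<xi> v * coef cf v \<alpha>))"
      by (intro sum.cong refl) (simp add: sum_distrib_left mult_ac)
    also have "\<dots> = (\<Sum>v\<in>A. \<Sum>\<alpha>\<in>Idx d (Suc m). \<Sum>u\<in>A. (\<xi> u * coef cf u \<alpha>) * cnj (\<xi> v * coef cf v \<alpha>))"
      by (intro sum.cong refl sum.swap)
    also have "\<dots> = (\<Sum>\<alpha>\<in>Idx d (Suc m). \<Sum>v\<in>A. \<Sum>u\<in>A. (\<xi> u * coef cf u \<alpha>) * cnj (\<xi> v * coef cf v \<alpha>))"
      by (rule sum.swap)
    also have "\<dots> = (\<Sum>\<alpha>\<in>Idx d (Suc m). (\<Sum>u\<in>A. \<xi> u * coef cf u \<alpha>) * cnj (\<Sum>v\<in>A. \<xi> v * coef cf v \<alpha>))"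
      by (intro sum.cong refl) (rule sum_cnj_product)
    also have "\<dots> = (\<Sum>\<alpha>\<in>Idx d (Suc m). complex_of_real ((cmod (\<Sum>u\<in>A. \<xi> u * coef cf u \<alpha>))\<^sup>2))"
      by (intro sum.cong refl) (rule complex_norm_square[symmetric])

    finally show ?thesis .
  qed
  have "r = 0 \<longrightarrow> (\<forall>\<alpha>\<in>Idx d (Suc m). (\<Sum>u\<in>A. \<xi> u * coef cf u \<alpha>) = 0)"
  proof (intro impI ballI)
    fix \<alpha> assume "r = 0" and \<alpha>: "\<alpha> \<in> Idx d (Suc m)"
    then have "b = 0" using a b cm unfolding r_def by (smt (verit) mult_pos_pos)
    then have "(\<Sum>\<alpha>\<in>Idx d (Suc m). (cmod (\<Sum>u\<in>A. \<xi> u * coef cf u \<alpha>))\<^sup>2) = 0"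
    proof -
      have "complex_of_real (\<Sum>\<alpha>\<in>Idx d (Suc m). (cmod (\<Sum>u\<in>A. \<xi> u * coef cf u \<alpha>))\<^sup>2) = \<phi> Y"
        unfolding phiY of_real_sum ..
      then show ?thesis using b \<open>b = 0\<close> by (simp only: of_real_eq_0_iff of_real_0)
    qed

    then have "\<forall>\<alpha>\<in>Idx d (Suc m). (cmod (\<Sum>u\<in>A. \<xi> u * coef cf u \<alpha>))\<^sup>2 = 0"
      by (subst (asm) sum_nonneg_eq_0_iff) (auto simp: Idx_finite)
    then show "(\<Sum>u\<in>A. \<xi> u * coef cf u \<alpha>) = 0" using \<alpha> by simp
  qed
  then show ?thesis using r0 rT unfolding cf_def d_def by blast
qed

end

theorem lemma2p4:
  fixes \<gamma> :: "'b::unital_star_algebra \<Rightarrow> 'b"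
    and \<phi> :: "'b \<Rightarrow> complex"
    and t :: real
    and \<xi> :: "'b list \<Rightarrow> complex"
  assumes "star_linear_functional \<phi>"
    and "positive_functional \<phi>"
    and "faithful \<phi>"
    and "star_linear_map \<gamma>"
    and "completely_positive (shift_map \<gamma> 1 \<phi>)"
    and "t < 1"
    and "completely_positive (shift_map \<gamma> (complex_of_real t) \<phi>)"
    and "finite {w. \<xi> w \<noteq> 0}"
    and "fock_form \<gamma> \<phi> \<xi> \<xi> = 0"
  shows "\<xi> \<in> fock_null"
proof -
  interpret fpf \<phi>
    by (rule fpf.intro[OF slf.intro[OF assms(1)] fpf_axioms.intro[OF assms(2,3)]])
  define K where "K = shift_map \<gamma> 1 \<phi>"
  define Kt where "Kt = shift_map \<gamma> (complex_of_real t) \<phi>"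
  define c where "c = 1 - t"
  have c: "0 < c" using assms(6) by (simp add: c_def)
  have linK: "linmap K" unfolding K_def by (rule linmap_shift[OF assms(4,1)])
  have gK: "gcp K" unfolding K_def by (rule cp_gcp[OF assms(5)])
  have gKt: "gcp Kt" unfolding Kt_def by (rule cp_gcp[OF assms(7)])
  have dec: "K x = Kt x + scaleC (complex_of_real c) (scaleC (\<phi> x) 1)" for x
  proof -
    have "scaleC (complex_of_real t * \<phi> x) (1::'b) + scaleC (complex_of_real c) (scaleC (\<phi> x) 1)
        = scaleC (complex_of_real t * \<phi> x + complex_of_real c * \<phi> x) 1"
      by (simp add: scaleC_scaleC scaleC_add_left)
    also have "complex_of_real t * \<phi> x + complex_of_real c * \<phi> x = \<phi> x"
      unfolding c_def by (simp add: algebra_simps)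
    finally show ?thesis unfolding K_def Kt_def shift_map_def by (simp add: add.assoc)
  qed
  define F where "F = {w. \<xi> w \<noteq> 0}"
  have fF: "finite F" using assms(8) unfolding F_def .
  define Fn where "Fn n = {u \<in> F. length u = n}" for n
  define Ns where "Ns = length ` F"
  have fNs: "finite Ns" unfolding Ns_def using fF by simp
  have fFn: "finite (Fn n)" for n unfolding Fn_def using fF by simp
  define T where "T n = (\<Sum>u\<in>Fn n. \<Sum>v\<in>Fn n. \<xi> u * cnj (\<xi> v) * word_form \<gamma> \<phi> u v)" for n
  have split: "fock_form \<gamma> \<phi> \<xi> \<xi> = (\<Sum>n\<in>Ns. T n)"
  proof -
    have "fock_form \<gamma> \<phi> \<xi> \<xi> = (\<Sum>u\<in>F. \<Sum>v\<in>F. \<xi> u * cnj (\<xi> v) * word_form \<gamma> \<phi> u v)"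
      unfolding fock_form_def F_def ..
    also have "\<dots> = (\<Sum>u\<in>F. \<Sum>v\<in>Fn (length u). \<xi> u * cnj (\<xi> v) * word_form \<gamma> \<phi> u v)"
    proof (rule sum.cong[OF refl])
      fix u assume "u \<in> F"
      show "(\<Sum>v\<in>F. \<xi> u * cnj (\<xi> v) * word_form \<gamma> \<phi> u v) = (\<Sum>v\<in>Fn (length u). \<xi> u * cnj (\<xi> v) * word_form \<gamma> \<phi> u v)"
        by (rule sum.mono_neutral_right[OF fF]) (auto simp: Fn_def word_form_def)
    qed
    also have "\<dots> = (\<Sum>n\<in>Ns. \<Sum>u\<in>{u \<in> F. length u = n}. \<Sum>v\<in>Fn (length u). \<xi> u * cnj (\<xi> v) * word_form \<gamma> \<phi> u v)"
      by (rule sum.group[symmetric]) (auto simp: Ns_def fF)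
    also have "\<dots> = (\<Sum>n\<in>Ns. T n)"
    proof (rule sum.cong[OF refl])
      fix n assume "n \<in> Ns"
      show "(\<Sum>u\<in>{u \<in> F. length u = n}. \<Sum>v\<in>Fn (length u). \<xi> u * cnj (\<xi> v) * word_form \<gamma> \<phi> u v) = T n"
        unfolding T_def
      proof (rule sum.cong)
        show "{u \<in> F. length u = n} = Fn n" by (simp add: Fn_def)
        fix u assume "u \<in> Fn n"
        then have "length u = n" by (simp add: Fn_def)
        then show "(\<Sum>v\<in>Fn (length u). \<xi> u * cnj (\<xi> v) * word_form \<gamma> \<phi> u v) = (\<Sum>v\<in>Fn n. \<xi> u * cnj (\<xi> v) * word_form \<gamma> \<phi> u v)"
          by simp
      qed
    qed

    finally show ?thesis .
  qed
  obtain wsF where wsF: "set wsF = F" using finite_list[OF fF] by blast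
  obtain es where on: "orthonormal \<phi> es" and sp: "\<forall>s\<in>set (concat wsF). inspan \<phi> es s"
    using onb_exists by blast
  have spF: "inspan \<phi> es s" if "u \<in> F" "s \<in> set u" for u s
    using sp wsF that by auto
  define d where "d = length es"
  define cf where "cf = (\<lambda>s k. \<phi> (star (es!k) * s))"
  define C where "C n \<alpha> = (\<Sum>u\<in>Fn n. \<xi> u * coef cf u \<alpha>)" for n \<alpha>
  have key: "\<exists>r\<ge>0. T n = complex_of_real r \<and> (r = 0 \<longrightarrow> (\<forall>\<alpha>\<in>Idx d n. C n \<alpha> = 0))" for n
  proof (cases n)
    case 0
    have F0: "Fn 0 = (if [] \<in> F then {[]} else {})" by (auto simp: Fn_def)
    have x0: "[] \<notin> F \<Longrightarrow> \<xi> [] = 0" by (simp add: F_def)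
    have "T 0 = \<xi> [] * cnj (\<xi> [])" unfolding T_def F0 using x0 by (auto simp: word_form_def)
    also have "\<dots> = complex_of_real ((cmod (\<xi> []))\<^sup>2)" by (rule complex_norm_square[symmetric])
    finally have T0: "T 0 = complex_of_real ((cmod (\<xi> []))\<^sup>2)" .
    have C0: "C 0 \<alpha> = \<xi> []" for \<alpha>
      unfolding C_def F0 using x0 by (cases \<alpha>) auto
    show ?thesis unfolding 0 using T0 C0 by (intro exI[of _ "(cmod (\<xi> []))\<^sup>2"]) auto
  next
    case (Suc m)
    have "\<exists>r\<ge>0. (\<Sum>u\<in>Fn n. \<Sum>v\<in>Fn n. \<xi> u * cnj (\<xi> v) * word_form \<gamma> \<phi> u v) = complex_of_real r \<and>
          (r = 0 \<longrightarrow> (\<forall>\<alpha>\<in>Idx (length es) (Suc m).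
              (\<Sum>u\<in>Fn n. \<xi> u * coef (\<lambda>s k. \<phi> (star (es!k) * s)) u \<alpha>) = 0))"
      by (rule T_suc[OF linK gK gKt K_def dec c fFn]) (auto simp: Fn_def Suc intro: spF)
    then show ?thesis unfolding T_def C_def cf_def d_def Suc .
  qed
  then have "\<forall>n. \<exists>r. r \<ge> 0 \<and> T n = complex_of_real r \<and> (r = 0 \<longrightarrow> (\<forall>\<alpha>\<in>Idx d n. C n \<alpha> = 0))"
    by blast
  from choice[OF this] obtain R where
    R: "\<forall>n. R n \<ge> 0 \<and> T n = complex_of_real (R n) \<and> (R n = 0 \<longrightarrow> (\<forall>\<alpha>\<in>Idx d n. C n \<alpha> = 0))"
    by blast
  have "complex_of_real (\<Sum>n\<in>Ns. R n) = 0"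
    using split assms(9) R by (simp add: of_real_sum)
  then have "(\<Sum>n\<in>Ns. R n) = 0" by (simp only: of_real_eq_0_iff)

  then have "\<forall>n\<in>Ns. R n = 0" using R fNs by (subst (asm) sum_nonneg_eq_0_iff) auto
  then have Czero: "C n \<alpha> = 0" if "n \<in> Ns" "\<alpha> \<in> Idx d n" for n \<alpha>
    using R that by blast
  have exp: "(\<lambda>x. wdelta u x - (\<Sum>\<alpha>\<in>Idx d (length u). coef cf u \<alpha> * wdelta (map (\<lambda>k. es!k) \<alpha>) x)) \<in> fock_null"
    if "u \<in> F" for u
  proof -
    have "\<forall>s\<in>set u. s = (\<Sum>k<d. scaleC (cf s k) (es!k))"
      using spF[OF that] unfolding inspan_def cf_def d_def by blast
    from word_expand[where xs="[]" and w=u and c=cf and e="\<lambda>k. es!k" and d=d, OF this]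
    show ?thesis by simp
  qed
  have N: "(\<lambda>x. \<Sum>u\<in>F. \<xi> u * (wdelta u x - (\<Sum>\<alpha>\<in>Idx d (length u). coef cf u \<alpha> * wdelta (map (\<lambda>k. es!k) \<alpha>) x))) \<in> fock_null"
  proof (rule N_sum[OF fF])
    fix u assume "u \<in> F"
    then show "(\<lambda>x. \<xi> u * (wdelta u x - (\<Sum>\<alpha>\<in>Idx d (length u). coef cf u \<alpha> * wdelta (map (\<lambda>k. es!k) \<alpha>) x))) \<in> fock_null"
      by (rule N_scale[OF exp])
  qed
  show ?thesis
  proof (rule N_cong[OF N], rule ext)
    fix x
    have a: "(\<Sum>u\<in>F. \<xi> u * wdelta u x) = \<xi> x"
    proof -
      have "(\<Sum>u\<in>F. \<xi> u * wdelta u x) = (\<Sum>u\<in>F. if u = x then \<xi> u else 0)"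
        by (intro sum.cong refl) (auto simp: wdelta_def)
      also have "\<dots> = \<xi> x" using fF by (simp add: sum.delta' F_def)
      finally show ?thesis .
    qed
    have b: "(\<Sum>u\<in>F. \<xi> u * (\<Sum>\<alpha>\<in>Idx d (length u). coef cf u \<alpha> * wdelta (map (\<lambda>k. es!k) \<alpha>) x)) = 0"
    proof -
      have "(\<Sum>u\<in>F. \<xi> u * (\<Sum>\<alpha>\<in>Idx d (length u). coef cf u \<alpha> * wdelta (map (\<lambda>k. es!k) \<alpha>) x))
          = (\<Sum>n\<in>Ns. \<Sum>u\<in>{u \<in> F. length u = n}. \<xi> u * (\<Sum>\<alpha>\<in>Idx d (length u). coef cf u \<alpha> * wdelta (map (\<lambda>k. es!k) \<alpha>) x))"
        by (rule sum.group[symmetric]) (auto simp: Ns_def fF)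
      also have "\<dots> = (\<Sum>n\<in>Ns. \<Sum>u\<in>Fn n. \<Sum>\<alpha>\<in>Idx d n. \<xi> u * coef cf u \<alpha> * wdelta (map (\<lambda>k. es!k) \<alpha>) x)"
      proof (rule sum.cong[OF refl])
        fix n assume "n \<in> Ns"
        show "(\<Sum>u\<in>{u \<in> F. length u = n}. \<xi> u * (\<Sum>\<alpha>\<in>Idx d (length u). coef cf u \<alpha> * wdelta (map (\<lambda>k. es!k) \<alpha>) x))
            = (\<Sum>u\<in>Fn n. \<Sum>\<alpha>\<in>Idx d n. \<xi> u * coef cf u \<alpha> * wdelta (map (\<lambda>k. es!k) \<alpha>) x)"
        proof (rule sum.cong)
          show "{u \<in> F. length u = n} = Fn n" by (simp add: Fn_def)
          fix u assume "u \<in> Fn n"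
          then have "length u = n" by (simp add: Fn_def)
          then show "\<xi> u * (\<Sum>\<alpha>\<in>Idx d (length u). coef cf u \<alpha> * wdelta (map (\<lambda>k. es!k) \<alpha>) x)
              = (\<Sum>\<alpha>\<in>Idx d n. \<xi> u * coef cf u \<alpha> * wdelta (map (\<lambda>k. es!k) \<alpha>) x)"
            by (simp add: sum_distrib_left mult.assoc)
        qed
      qed
      also have "\<dots> = (\<Sum>n\<in>Ns. \<Sum>\<alpha>\<in>Idx d n. C n \<alpha> * wdelta (map (\<lambda>k. es!k) \<alpha>) x)"
      proof (rule sum.cong[OF refl])

        fix n assume "n \<in> Ns"
        show "(\<Sum>u\<in>Fn n. \<Sum>\<alpha>\<in>Idx d n. \<xi> u * coef cf u \<alpha> * wdelta (map (\<lambda>k. es!k) \<alpha>) x)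
            = (\<Sum>\<alpha>\<in>Idx d n. C n \<alpha> * wdelta (map (\<lambda>k. es!k) \<alpha>) x)"
          unfolding C_def by (subst sum.swap) (simp add: sum_distrib_right)
      qed
      also have "\<dots> = 0" by (intro sum.neutral ballI) (simp add: Czero)
      finally show ?thesis .
    qed
    have "(\<Sum>u\<in>F. \<xi> u * (wdelta u x - (\<Sum>\<alpha>\<in>Idx d (length u). coef cf u \<alpha> * wdelta (map (\<lambda>k. es!k) \<alpha>) x)))
        = (\<Sum>u\<in>F. \<xi> u * wdelta u x) - (\<Sum>u\<in>F. \<xi> u * (\<Sum>\<alpha>\<in>Idx d (length u). coef cf u \<alpha> * wdelta (map (\<lambda>k. es!k) \<alpha>) x))"
      by (simp add: right_diff_distrib sum_subtractf)
    then show "(\<Sum>u\<in>F. \<xi> u * (wdelta u x - (\<Sum>\<alpha>\<in>Idx d (length u). coef cf u \<alpha> * wdelta (map (\<lambda>k. es!k) \<alpha>) x))) = \<xi> x"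
      using a b by simp
  qed
qed

end
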